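(* Let $A\in\mathcal A$ and $k\ge1$, and let $B_A(\cdot;k)$ be its $k$-th degree Bernstein polynomial. Assume that ${\boldsymbol w}\mapsto B_A({\boldsymbol w};k)$ is convex on $\mathcal S_{d-1}$ and that $B_A({\boldsymbol v}_j;k)=1$ for all $j\in\{0,\dots,d-1\}$. Then $$B_A({\boldsymbol w};k)\ge\max(w_1,\dots,w_d)\ \text{ for all }{\boldsymbol w}\in\mathcal S_{d-1}\iff D_{{\boldsymbol v}_i-{\boldsymbol v}_j}B_A({\boldsymbol v}_j;k)\ge-1\ \text{ for all }(i,j)\in\{0,\dots,d-1\}^2,\ i\ne j.$$
   Context: $d\ge2$; $\mathcal S_{d-1}=\{(w_1,\dots,w_{d-1})\in[0,1]^{d-1}:\sum w_i\le1\}\subset\mathbb R^{d-1}$, $w_d=1-w_1-\dots-w_{d-1}$. $\mathcal A$ is the family of convex functions $A:\mathcal S_{d-1}\to[1/d,1]$ with $\max(w_1,\dots,w_d)\le A({\boldsymbol w})\le1$. $\Gamma_k$ is the set of ${\boldsymbol\alpha}\in\{0,\dots,k\}^{d-1}$ with $\sum\alpha_i\le k$, $\alpha_d=k-\sum_{i<d}\alpha_i$; $b_{\boldsymbol\alpha}({\boldsymbol w};k)=\frac{k!}{\alpha_1!\cdots\alpha_d!}\prod_{i=1}^dw_i^{\alpha_i}$ and $B_A({\boldsymbol w};k)=\sum_{{\boldsymbol\alpha}\in\Gamma_k}A({\boldsymbol\alpha}/k)b_{\boldsymbol\alpha}({\boldsymbol w};k)$ (a polynomial, hence defined on all of $\mathbb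 R^{d-1}$). The vertices are ${\boldsymbol v}_0={\bf 0}$ and ${\boldsymbol v}_r={\boldsymbol e}_r$ (canonical unit vector of $\mathbb R^{d-1}$), $r=1,\dots,d-1$. For ${\boldsymbol u}\in\mathbb R^{d-1}$, $D_{\boldsymbol u}B({\boldsymbol w};k)={\boldsymbol u}^\top\nabla B({\boldsymbol w};k)$ denotes the directional derivative. *)

theory Defs
  imports "HOL-Analysis.Analysis"
begin

text \<open>Points of R^(d-1) are vectors of type real^'n, with d - 1 = CARD('n), i.e. d = CARD('n) + 1 >= 2.\<close>

definition dim_d :: "'n::finite itself \<Rightarrow> nat" where
  "dim_d _ = CARD('n) + 1"

text \<open>w_d = 1 - w_1 - ... - w_(d-1)\<close>
definition lastc :: "real^'n::finite \<Rightarrow> real" where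
  "lastc w = 1 - (\<Sum>i\<in>UNIV. w $ i)"

definition simplexS :: "(real^'n::finite) set" where
  "simplexS = {w. (\<forall>i. 0 \<le> w $ i \<and> w $ i \<le> 1) \<and> (\<Sum>i\<in>UNIV. w $ i) \<le> 1}"

definition maxc :: "real^'n::finite \<Rightarrow> real" where
  "maxc w = Max (insert (lastc w) (range (\<lambda>i. w $ i)))"

definition classA :: "(real^'n::finite \<Rightarrow> real) set" where
  "classA = {A. convex_on simplexS A \<and>
     (\<forall>w\<in>simplexS. 1 / real (dim_d TYPE('n)) \<le> A w \<and> A w \<le> 1 \<and> maxc w \<le> A w)}"

definition Gamma :: "nat \<Rightarrow> ('n::finite \<Rightarrow> nat) set" where
  "Gamma k = {\<alpha>. (\<forall>i. \<alpha> i \<le> k) \<and> (\<Sum>i\<in>UNIV. \<alpha> i) \<le> k}"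

definition alpha_last :: "nat \<Rightarrow> ('n::finite \<Rightarrow> nat) \<Rightarrow> nat" where
  "alpha_last k \<alpha> = k - (\<Sum>i\<in>UNIV. \<alpha> i)"

definition bern_basis :: "nat \<Rightarrow> ('n::finite \<Rightarrow> nat) \<Rightarrow> real^'n \<Rightarrow> real" where
  "bern_basis k \<alpha> w =
     fact k / ((\<Prod>i\<in>UNIV. fact (\<alpha> i)) * fact (alpha_last k \<alpha>)) *
     ((\<Prod>i\<in>UNIV. (w $ i) ^ (\<alpha> i)) * (lastc w) ^ (alpha_last k \<alpha>))"

text \<open>B_A(w;k), a polynomial defined on all of R^(d-1)\<close>
definition bernstein :: "(real^'n::finite \<Rightarrow> real) \<Rightarrow> nat \<Rightarrow> real^'n \<Rightarrow> real" where
  "bernstein A k w = (\<Sum>\<alpha>\<in>Gamma k. A (\<chi> i. real (\<alpha> i) / real k) * bern_basis k \<alpha> w)"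

text \<open>Vertices: None is v_0 = 0, Some r is v_r = e_r\<close>
definition vertex :: "'n::finite option \<Rightarrow> real^'n" where
  "vertex j = (case j of None \<Rightarrow> 0 | Some r \<Rightarrow> axis r 1)"

definition partial :: "(real^'n::finite \<Rightarrow> real) \<Rightarrow> 'n \<Rightarrow> real^'n \<Rightarrow> real" where
  "partial f i w = deriv (\<lambda>t. f (w + t *\<^sub>R axis i 1)) 0"

definition dderiv :: "(real^'n::finite \<Rightarrow> real) \<Rightarrow> real^'n \<Rightarrow> real^'n \<Rightarrow> real" where
  "dderiv f u w = (\<Sum>i\<in>UNIV. u $ i * partial f i w)"

end

theory Submission
  imports Defs
begin


lemma diff_nth: "(\<lambda>w::real^'n::finite. w $ i) differentiable (at x)"
  using bounded_linear_imp_differentiable[OF bounded_linear_vec_nth] by blast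

lemma diff_prod: "(\<lambda>w::real^'n::finite. \<Prod>i\<in>UNIV. (w $ i) ^ (a i)) differentiable (at x)"
  unfolding differentiable_def
  by (rule exI, rule has_derivative_prod, auto intro!: derivative_eq_intros bounded_linear_imp_has_derivative bounded_linear_vec_nth)

lemma diff_lastc: "(\<lambda>w::real^'n::finite. lastc w ^ m) differentiable (at x)"
  unfolding lastc_def differentiable_def
  by (rule exI, auto intro!: derivative_eq_intros bounded_linear_imp_has_derivative bounded_linear_vec_nth)

lemma diff_basis: "bern_basis k a differentiable (at x)"
  unfolding bern_basis_def[abs_def]
  by (intro differentiable_mult differentiable_const diff_prod diff_lastc)

lemma diff_bern: fixes A :: "real^'n::finite \<Rightarrow> real" shows "bernstein A k differentiable (at x)"
proof (cases "finite (Gamma k :: ('n::finite \<Rightarrow> nat) set)")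
  case True
  show ?thesis unfolding bernstein_def[abs_def]
    using True by (auto intro!: differentiable_sum differentiable_mult diff_basis)
next
  case False
  then show ?thesis unfolding bernstein_def[abs_def] by simp
qed


lemma line_deriv:
  fixes f :: "real^'n::finite \<Rightarrow> real"
  assumes D: "(f has_derivative D) (at w)"
  shows "((\<lambda>t. f (w + t *\<^sub>R u)) has_real_derivative D u) (at 0)"
proof -
  have lin: "linear D" using D has_derivative_linear by blast
  have g: "((\<lambda>t::real. w + t *\<^sub>R u) has_derivative (\<lambda>t. t *\<^sub>R u)) (at 0)"
    by (auto intro!: derivative_eq_intros)
  have "((\<lambda>t. f (w + t *\<^sub>R u)) has_derivative (\<lambda>t. D (t *\<^sub>R u))) (at 0)"
    using has_derivative_compose[OF g] D by simp
  moreover have "(\<lambda>t. D (t *\<^sub>R u)) = (\<lambda>t. D u * t)"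
    using linear_scale[OF lin] by (auto simp: mult.commute)
  ultimately show ?thesis by (simp add: has_field_derivative_def)
qed

lemma dderiv_eq:
  fixes f :: "real^'n::finite \<Rightarrow> real"
  assumes D: "(f has_derivative D) (at w)"
  shows "dderiv f u w = D u"
proof -
  have lin: "linear D" using D has_derivative_linear by blast
  have p: "partial f i w = D (axis i 1)" for i
    unfolding partial_def using line_deriv[OF D] DERIV_imp_deriv by blast
  have "dderiv f u w = (\<Sum>i\<in>UNIV. D ((u $ i) *\<^sub>R axis i 1))"
    unfolding dderiv_def p using linear_scale[OF lin] by simp
  also have "\<dots> = D (\<Sum>i\<in>UNIV. (u $ i) *\<^sub>R axis i 1)"
    by (rule linear_sum[OF lin, symmetric])
  also have "(\<Sum>i\<in>UNIV. (u $ i) *\<^sub>R axis i 1) = u"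
    using basis_expansion[of u] by (simp add: scalar_mult_eq_scaleR)
  finally show ?thesis by simp
qed


definition bary :: "real^'n::finite \<Rightarrow> 'n option \<Rightarrow> real" where
  "bary w j = (case j of None \<Rightarrow> lastc w | Some r \<Rightarrow> w $ r)"

lemma bary_le_maxc: "bary w j \<le> maxc w"
  unfolding maxc_def bary_def by (cases j) (auto intro: max.coboundedI2 Max_ge)

lemma maxc_le: "(\<And>j. bary w j \<le> c) \<Longrightarrow> maxc w \<le> c"
  unfolding maxc_def
  by (subst Max_le_iff) (auto simp: bary_def, metis option.simps(4), metis option.simps(5))

lemma sum_axis: "(\<Sum>i\<in>UNIV. axis r (1::real) $ i) = 1"
  by (simp add: axis_def)

lemma bary_vertex: "bary (vertex i) j = (if i = j then 1 else 0)"
  unfolding bary_def vertex_def lastc_def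
  by (cases i; cases j) (auto simp: sum_axis axis_def)

lemma bary_line: "bary (a + t *\<^sub>R (b - a)) j = bary a j + t * (bary b j - bary a j)"
  unfolding bary_def lastc_def
  by (cases j) (auto simp: sum.distrib sum_subtractf sum_distrib_left[symmetric] algebra_simps)

lemma bary_nonneg: "w \<in> simplexS \<Longrightarrow> 0 \<le> bary w j"
  unfolding bary_def simplexS_def lastc_def by (cases j) auto

lemma sum_option: "(\<Sum>j\<in>(UNIV::'a option set). f j) = f None + (\<Sum>r\<in>UNIV. f (Some r))"
  for f :: "'a::finite option \<Rightarrow> 'b::comm_monoid_add"
  by (subst UNIV_option_conv) (simp add: sum.reindex)

lemma sum_bary: "(\<Sum>j\<in>UNIV. bary w j) = 1"
  unfolding sum_option bary_def lastc_def by simp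

lemma sum_bary_vertex: "(\<Sum>j\<in>UNIV. bary w j *\<^sub>R vertex j) = w"
  unfolding sum_option bary_def vertex_def
  using basis_expansion[of w] by (simp add: scalar_mult_eq_scaleR)

lemma sum_bary_diff: "(\<Sum>j\<in>UNIV. bary w j *\<^sub>R (vertex j - v)) = w - v"
proof -
  have "(\<Sum>j\<in>UNIV. bary w j *\<^sub>R (vertex j - v)) = (\<Sum>j\<in>UNIV. bary w j *\<^sub>R vertex j) - (\<Sum>j\<in>UNIV. bary w j) *\<^sub>R v"
    by (simp add: scaleR_diff_right sum_subtractf scaleR_sum_left)
  then show ?thesis by (simp add: sum_bary_vertex sum_bary)
qed

lemma convex_simplexS: "convex (simplexS :: (real^'n::finite) set)"
  unfolding convex_alt
proof (intro ballI allI impI)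
  fix x y :: "real^'n" and u :: real
  assume xS: "x \<in> simplexS" and yS: "y \<in> simplexS" and u0: "0 \<le> u \<and> u \<le> 1"
  have u: "0 \<le> u" "u \<le> 1" using u0 by auto
  have x: "\<forall>i. 0 \<le> x $ i \<and> x $ i \<le> 1" "sum (($) x) UNIV \<le> 1" using xS by (auto simp: simplexS_def)
  have y: "\<forall>i. 0 \<le> y $ i \<and> y $ i \<le> 1" "sum (($) y) UNIV \<le> 1" using yS by (auto simp: simplexS_def)
  have c: "0 \<le> (1 - u) * x $ i + u * y $ i \<and> (1 - u) * x $ i + u * y $ i \<le> 1" for i
  proof -
    have a: "0 \<le> x $ i" "x $ i \<le> 1" "0 \<le> y $ i" "y $ i \<le> 1" using x y by auto
    show ?thesis using a u
      by (metis add_nonneg_nonneg convex_bound_le diff_ge_0_iff_ge le_add_diff_inverse2 mult_nonneg_nonneg)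
  qed
  have "(\<Sum>i\<in>UNIV. (1 - u) * x $ i + u * y $ i) = (1-u) * sum (($) x) UNIV + u * sum (($) y) UNIV"
    by (simp add: sum.distrib sum_distrib_left)
  also have "\<dots> \<le> 1" using x y u
    by (metis convex_bound_le diff_ge_0_iff_ge le_add_diff_inverse2)
  finally have s: "(\<Sum>i\<in>UNIV. (1 - u) * x $ i + u * y $ i) \<le> 1" .
  show "(1 - u) *\<^sub>R x + u *\<^sub>R y \<in> simplexS"
    unfolding simplexS_def using c s by simp
qed

lemma vertex_in: "vertex j \<in> simplexS"
  unfolding vertex_def simplexS_def by (cases j) (auto simp: axis_def sum_axis)

lemma above_tangent:
  fixes f :: "real^'n::finite \<Rightarrow> real"
  assumes cv: "convex_on S f" and x: "x \<in> S" and y: "y \<in> S" and D: "(f has_derivative D) (at x)"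
  shows "f x + D (y - x) \<le> f y"
proof (rule ccontr)
  assume "\<not> ?thesis"
  hence lt: "D (y - x) - (f y - f x) > 0" by simp
  have "((\<lambda>t. f (x + t *\<^sub>R (y - x)) - t * (f y - f x)) has_real_derivative D (y - x) - (f y - f x)) (at 0)"
    using line_deriv[OF D] by (auto intro!: derivative_eq_intros)
  from DERIV_pos_inc_right[OF this lt] obtain d where d: "d > 0"
    and dd: "\<And>h. h > 0 \<Longrightarrow> h < d \<Longrightarrow> f x < f (x + h *\<^sub>R (y - x)) - h * (f y - f x)" by auto
  define t where "t = min d 1 / 2"
  have t: "0 < t" "t < d" "t \<le> 1" using d by (auto simp: t_def)
  have "f x < f (x + t *\<^sub>R (y - x)) - t * (f y - f x)" using dd t by auto
  moreover have "x + t *\<^sub>R (y - x) = (1 - t) *\<^sub>R x + t *\<^sub>R y" by (simp add: algebra_simps)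
  moreover have "f ((1 - t) *\<^sub>R x + t *\<^sub>R y) \<le> (1 - t) * f x + t * f y"
    using convex_onD[OF cv] t x y by auto
  ultimately show False by (simp add: algebra_simps)
qed



theorem mainTheorem5:
  fixes A :: "real^'n::finite \<Rightarrow> real" and k :: nat
  assumes "A \<in> classA"
    and "k \<ge> 1"
    and "convex_on simplexS (bernstein A k)"
    and "\<forall>j. bernstein A k (vertex j) = 1"
  shows "(\<forall>w\<in>simplexS. bernstein A k w \<ge> maxc w) \<longleftrightarrow>
         (\<forall>i j. i \<noteq> j \<longrightarrow> dderiv (bernstein A k) (vertex i - vertex j) (vertex j) \<ge> -1)"
proof -
  let ?B = "bernstein A k"
  have Dex: "\<exists>D. (?B has_derivative D) (at w)" for w
    using diff_bern[of A k w] unfolding differentiable_def by blast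
  have v1: "?B (vertex j) = 1" for j using assms(4) by blast
  show ?thesis
  proof
    assume H: "\<forall>w\<in>simplexS. ?B w \<ge> maxc w"
    show "\<forall>i j. i \<noteq> j \<longrightarrow> dderiv ?B (vertex i - vertex j) (vertex j) \<ge> -1"
    proof (intro allI impI)
      fix i j :: "'n option" assume ij: "i \<noteq> j"
      obtain D where D: "(?B has_derivative D) (at (vertex j))" using Dex by blast
      define u where "u = vertex i - vertex j"
      have dd: "dderiv ?B u (vertex j) = D u" using dderiv_eq[OF D] .
      show "dderiv ?B (vertex i - vertex j) (vertex j) \<ge> -1"
      proof (rule ccontr)
        assume "\<not> ?thesis"
        hence lt: "D u + 1 < 0" using dd u_def by simp
        have "((\<lambda>t. ?B (vertex j + t *\<^sub>R u) + t) has_real_derivative D u + 1) (at 0)"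
          using line_deriv[OF D] by (auto intro!: derivative_eq_intros)
        from DERIV_neg_dec_right[OF this lt] obtain d where d: "d > 0"
          and dd: "\<And>h. h > 0 \<Longrightarrow> h < d \<Longrightarrow> ?B (vertex j) > ?B (vertex j + h *\<^sub>R u) + h" by auto
        define t where "t = min d 1 / 2"
        have t: "0 < t" "t < d" "t \<le> 1" using d by (auto simp: t_def)
        have lt2: "?B (vertex j + t *\<^sub>R u) + t < 1" using dd[OF t(1,2)] v1 by simp
        have eq: "vertex j + t *\<^sub>R u = (1 - t) *\<^sub>R vertex j + t *\<^sub>R vertex i"
          unfolding u_def by (simp add: algebra_simps)
        have inS: "vertex j + t *\<^sub>R u \<in> simplexS"
          unfolding eq using t by (intro convex_simplexS[unfolded convex_alt, rule_format] vertex_in) auto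
        have "bary (vertex j + t *\<^sub>R u) j = 1 - t"
          unfolding u_def bary_line bary_vertex using ij by simp
        hence "1 - t \<le> maxc (vertex j + t *\<^sub>R u)" using bary_le_maxc by metis
        with H inS have "1 - t \<le> ?B (vertex j + t *\<^sub>R u)" by fastforce
        with lt2 show False by simp
      qed
    qed
  next
    assume H: "\<forall>i j. i \<noteq> j \<longrightarrow> dderiv ?B (vertex i - vertex j) (vertex j) \<ge> -1"
    show "\<forall>w\<in>simplexS. ?B w \<ge> maxc w"
    proof
      fix w :: "real^'n" assume w: "w \<in> simplexS"
      show "?B w \<ge> maxc w"
      proof (rule maxc_le)
        fix j
        obtain D where D: "(?B has_derivative D) (at (vertex j))" using Dex by blast
        have lin: "linear D" using D has_derivative_linear by blast
        have tan: "?B (vertex j) + D (w - vertex j) \<le> ?B w"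
          using above_tangent[OF assms(3) vertex_in w D] .
        have "D (w - vertex j) = (\<Sum>i\<in>UNIV. bary w i * D (vertex i - vertex j))"
          unfolding sum_bary_diff[symmetric, of w "vertex j"]
          by (simp only: linear_sum[OF lin] linear_scale[OF lin] real_scaleR_def)
        also have "\<dots> \<ge> (\<Sum>i\<in>UNIV. - bary w i + (if i = j then bary w i else 0))"
        proof (rule sum_mono)
          fix i :: "'n option"
          show "bary w i * D (vertex i - vertex j) \<ge> - bary w i + (if i = j then bary w i else 0)"
          proof (cases "i = j")
            case True then show ?thesis by (simp add: linear_0[OF lin])
          next
            case False
            have "D (vertex i - vertex j) \<ge> -1" using H False dderiv_eq[OF D] by metis
            then have "bary w i * D (vertex i - vertex j) \<ge> bary w i * (-1)"
              using bary_nonneg[OF w] by (intro mult_left_mono) auto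
            then show ?thesis using False by simp
          qed
        qed
        also have "(\<Sum>i\<in>UNIV. - bary w i + (if i = j then bary w i else 0)) = bary w j - 1"
          by (simp only: sum.distrib sum_negf sum_bary sum.delta finite UNIV_I if_True)
        finally show "bary w j \<le> ?B w" using tan v1 by simp
      qed
    qed
  qed
qed
end
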